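(* Let $m$ be a positive integer and $h$ a positive integer, and assume that the ternary (base-3) expansion of $4^m$ contains no block of $h$ consecutive digits all equal to $0$, and no block of $h$ consecutive digits all equal to $2$. Then the inequality $$\biggl\|\biggl(\frac43\biggr)^k\biggr\| \ge \biggl(\frac49\biggr)^k$$ holds for all integers $k$ satisfying $$m\,\frac{\log 4}{\log 9} + \frac h2 \le k \le m,$$ where $\|x\|$ denotes the distance from the real number $x$ to the nearest integer.
   Context: $\|x\| = \min_{n\in\mathbb Z}|x-n|$ for real $x$. The ternary expansion is the standard base-3 representation of the positive integer $4^m$ (with digits in $\{0,1,2\}$, no leading zeros beyond the representation). *)

theory Defs
  imports "HOL-Analysis.Analysis"
begin

text \<open>Base-3 digits of a natural number, least significant digit first;
  the representation of 0 is the empty list (irrelevant here since 4^m > 0).\<close>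
fun ternary_digits :: "nat \<Rightarrow> nat list" where
  "ternary_digits n = (if n = 0 then [] else n mod 3 # ternary_digits (n div 3))"

declare ternary_digits.simps [simp del]

definition has_block :: "nat list \<Rightarrow> nat \<Rightarrow> nat \<Rightarrow> bool" where
  "has_block ds h d \<longleftrightarrow> (\<exists>i. i + h \<le> length ds \<and> (\<forall>j<h. ds ! (i + j) = d))"

definition dist_int :: "real \<Rightarrow> real" where
  "dist_int x = (INF n::int. \<bar>x - of_int n\<bar>)"

end

theory Submission imports Defs begin

lemma digit_nth:
  "3 ^ i \<le> n \<Longrightarrow> i < length (ternary_digits n) \<and> ternary_digits n ! i = n div 3 ^ i mod 3"
proof (induction i arbitrary: n)
  case 0
  then have "n \<noteq> 0" by simp
  then have e: "ternary_digits n = n mod 3 # ternary_digits (n div 3)"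
    by (subst ternary_digits.simps) simp
  show ?case by (simp add: e)
next
  case (Suc i)
  have "3 ^ i \<le> n div 3" using Suc.prems
    by (simp add: less_eq_div_iff_mult_less_eq mult.commute)
  from Suc.IH[OF this] have IH: "i < length (ternary_digits (n div 3))"
     "ternary_digits (n div 3) ! i = n div 3 div 3 ^ i mod 3" by auto
  have n0: "n \<noteq> 0" using Suc.prems by (metis le_zero_eq power_not_zero zero_neq_numeral)
  have e: "ternary_digits n = n mod 3 # ternary_digits (n div 3)"
    using n0 by (subst ternary_digits.simps) simp
  show ?case using IH by (simp add: e div_mult2_eq)
qed

lemma digit_low:
  fixes N R :: nat
  assumes "p < k"
  shows "N div 3 ^ p mod 3 = (N mod 3 ^ k) div 3 ^ p mod 3"
proof -
  have A: "a div 3 ^ p mod 3 = (a mod 3 ^ Suc p) div 3 ^ p" for a :: nat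
    using mod_mult2_eq[of a "3^p" 3] by (simp add: mult.commute)
  have d: "(3::nat) ^ Suc p dvd 3 ^ k" by (rule le_imp_power_dvd) (use assms in simp)
  show ?thesis using A[of N] A[of "N mod 3^k"] mod_mod_cancel[OF d] by simp
qed

lemma block0:
  fixes N k h :: nat
  assumes "h \<le> k" "0 < k" "3 ^ k \<le> N" "N mod 3 ^ k < 3 ^ (k - h)"
  shows "has_block (ternary_digits N) h 0"
  unfolding has_block_def
proof (intro exI conjI allI impI)
  have "(3::nat) ^ (k - 1) \<le> 3 ^ k" by (rule power_increasing) simp_all
  hence "3 ^ (k - 1) \<le> N" using assms(3) by (rule le_trans)
  from digit_nth[OF this] show "k - h + h \<le> length (ternary_digits N)" using assms by auto
  fix j assume j: "j < h"
  have "(3::nat) ^ (k - h + j) \<le> 3 ^ k" by (rule power_increasing) (use j assms(1) in simp_all)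
  hence p: "3 ^ (k - h + j) \<le> N" using assms(3) by (rule le_trans)
  have "(N mod 3 ^ k) div 3 ^ (k - h + j) = 0"
  proof -
    have "(3::nat) ^ (k - h) \<le> 3 ^ (k - h + j)" by (simp add: power_increasing)
    hence "N mod 3 ^ k < 3 ^ (k - h + j)" using assms(4) by linarith
    thus ?thesis by (rule div_less)
  qed
  thus "ternary_digits N ! (k - h + j) = 0"
    using digit_nth[OF p] digit_low[of "k - h + j" k N] j assms(1) by simp
qed

lemma block2:
  fixes N k h :: nat
  assumes "h \<le> k" "0 < k" "3 ^ k \<le> N" "N mod 3 ^ k \<ge> 3 ^ k - 3 ^ (k - h)"
  shows "has_block (ternary_digits N) h 2"
  unfolding has_block_def
proof (intro exI conjI allI impI)
  have "(3::nat) ^ (k - 1) \<le> 3 ^ k" by (rule power_increasing) simp_all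
  hence "3 ^ (k - 1) \<le> N" using assms(3) by (rule le_trans)
  from digit_nth[OF this] show "k - h + h \<le> length (ternary_digits N)" using assms by auto
  fix j assume j: "j < h"
  define p where "p = k - h + j"
  define s where "s = k - p"
  have s1: "1 \<le> s" and kps: "k = p + s" using j assms(1) unfolding s_def p_def by auto
  have "(3::nat) ^ p \<le> 3 ^ k" by (rule power_increasing) (use kps in simp_all)
  hence p: "3 ^ p \<le> N" using assms(3) by (rule le_trans)
  define R where "R = N mod 3 ^ k"
  have Rlt: "R < 3 ^ k" unfolding R_def by simp
  have pp: "(3::nat) ^ (k - h) \<le> 3 ^ p" unfolding p_def by (simp add: power_increasing)
  have k3: "(3::nat) ^ k = 3 ^ p * 3 ^ s" using kps by (simp add: power_add)
  have lo: "3 ^ p * (3 ^ s - 1) \<le> R"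
  proof -
    have "3 ^ p * (3 ^ s - 1) = 3 ^ k - (3::nat) ^ p" using k3 by (simp add: right_diff_distrib')
    also have "\<dots> \<le> 3 ^ k - 3 ^ (k - h)" using pp by (rule diff_le_mono2)
    finally show ?thesis using assms(4) R_def by simp
  qed
  have hi: "R < 3 ^ p * 3 ^ s" using Rlt k3 by simp
  have "R div 3 ^ p = 3 ^ s - 1"
  proof -
    have a: "3 ^ s - 1 \<le> R div 3 ^ p" using lo
      by (simp add: less_eq_div_iff_mult_less_eq mult.commute)
    have b: "R div 3 ^ p < 3 ^ s" using hi
      by (simp add: div_less_iff_less_mult mult.commute)
    show ?thesis using a b by linarith
  qed
  moreover have "((3::nat) ^ s - 1) mod 3 = 2"
  proof -
    obtain t where "s = Suc t" using s1 by (cases s) auto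
    hence "(3::nat) ^ s = 3 * 3 ^ t" by simp
    moreover have "(3::nat) ^ t \<ge> 1" by simp
    ultimately have "(3::nat) ^ s - 1 = 3 * (3 ^ t - 1) + 2" by linarith
    moreover have "\<And>a::nat. (3 * a + 2) mod 3 = 2" by presburger
    ultimately show ?thesis by metis
  qed
  ultimately show "ternary_digits N ! (k - h + j) = 2"
    using digit_nth[OF p] digit_low[of p k N] kps s1 unfolding p_def R_def by simp
qed

lemma aux_eq1: fixes kn :: nat and n e :: int
  assumes e_def: "e = 4 ^ kn - n * 3 ^ kn"
  shows "(4/3::real) ^ kn - real_of_int n = real_of_int e / 3 ^ kn"
proof -
  have p3: "(3::real) ^ kn \<noteq> 0" by simp
  have "real_of_int e = 4^kn - real_of_int n * 3^kn" unfolding e_def by simp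
  then show ?thesis using p3 by (simp add: power_divide diff_divide_distrib)
qed
lemma aux_elt: fixes kn :: nat and n e :: int
  assumes p3: "(3::real) ^ kn > 0" and lt: "\<bar>real_of_int e / 3 ^ kn\<bar> < (4 ^ kn / 3 ^ kn) / 3 ^ kn"
  shows "\<bar>real_of_int e\<bar> < 4 ^ kn / 3 ^ kn"
proof -
  have "\<bar>real_of_int e\<bar> / 3 ^ kn < (4 ^ kn / 3 ^ kn) / 3 ^ kn" using lt p3 by (simp only: abs_divide abs_of_pos)
  thus ?thesis using p3 divide_less_cancel by blast
qed
lemma aux_Elt: fixes E :: int and j :: nat
  assumes "\<bar>real_of_int E\<bar> < 3 ^ j" shows "\<bar>E\<bar> < 3 ^ j"
proof -
  have "real_of_int \<bar>E\<bar> < real_of_int ((3::int)^j)" using assms by simp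
  thus ?thesis by (simp only: of_int_less_iff)
qed

theorem lemma1:
  fixes m h :: nat
  assumes "0 < m" and "0 < h"
    and "\<not> has_block (ternary_digits (4 ^ m)) h 0"
    and "\<not> has_block (ternary_digits (4 ^ m)) h 2"
  shows "\<forall>k::int. real m * ln 4 / ln 9 + real h / 2 \<le> real_of_int k \<and> k \<le> int m \<longrightarrow>
           dist_int ((4 / 3) powi k) \<ge> (4 / 9) powi k"
proof (intro allI impI)
  fix k :: int
  assume kb: "real m * ln 4 / ln 9 + real h / 2 \<le> real_of_int k \<and> k \<le> int m"
  have ln9: "ln (9::real) = 2 * ln 3"
    using ln_realpow[of 3 2] by simp
  have ln3: "ln (3::real) > 0" by simp
  have ln4: "ln (4::real) > 0" by simp
  have b1: "real m * ln 4 + real h * ln 3 \<le> real_of_int k * ln 9"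
  proof -
    have "(real m * ln 4 / ln 9 + real h / 2) * ln 9 \<le> real_of_int k * ln 9"
      using kb ln3 ln9 by (intro mult_right_mono) auto
    moreover have "(real m * ln 4 / ln 9 + real h / 2) * ln 9 = real m * ln 4 + real h * ln 3"
      using ln9 ln3 by (simp add: field_simps)
    ultimately show ?thesis by simp
  qed
  have kpos: "k > 0"
  proof -
    have "real m * ln 4 + real h * ln 3 > 0" using assms(2) ln3 ln4
      by (simp add: add_nonneg_pos)
    hence "real_of_int k * ln 9 > 0" using b1 by linarith
    thus ?thesis using ln3 ln9 by (simp add: zero_less_mult_iff)
  qed
  obtain kn :: nat where kn: "k = int kn" using kpos by (metis zero_le_imp_eq_int less_imp_le)
  have kn0: "0 < kn" using kpos kn by simp
  have knm: "kn \<le> m" using kb kn by simp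
  have key: "(4::nat) ^ m * 3 ^ h \<le> 9 ^ kn"
  proof -
    have "ln (real ((4::nat) ^ m * 3 ^ h)) = real m * ln 4 + real h * ln 3"
      by (simp add: ln_mult ln_realpow)
    also have "\<dots> \<le> real kn * ln 9" using b1 kn by simp
    also have "\<dots> = ln (real ((9::nat) ^ kn))" by (simp add: ln_realpow)
    finally have "ln (real ((4::nat) ^ m * 3 ^ h)) \<le> ln (real ((9::nat) ^ kn))" .
    hence "real ((4::nat) ^ m * 3 ^ h) \<le> real ((9::nat) ^ kn)"
      by (subst (asm) ln_le_cancel_iff) auto
    thus ?thesis by linarith
  qed
  have hk: "h < kn"
  proof (rule ccontr)
    assume "\<not> h < kn"
    hence "(3::nat) ^ kn \<le> 3 ^ h" by (simp add: power_increasing)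
    moreover have "(4::nat) ^ kn \<le> 4 ^ m" using knm by (simp add: power_increasing)
    ultimately have "(4::nat) ^ kn * 3 ^ kn \<le> 9 ^ kn" using key
      by (meson le_trans mult_le_mono)
    moreover have "(9::nat) ^ kn < 12 ^ kn" using kn0 by (simp add: power_strict_mono)
    moreover have "(12::nat) ^ kn = 4 ^ kn * 3 ^ kn" by (simp flip: power_mult_distrib)
    ultimately show False by simp
  qed
  have n9: "(9::nat) ^ kn = 3 ^ kn * 3 ^ (kn - h) * 3 ^ h"
  proof -
    have a: "(9::nat) ^ kn = 3 ^ kn * 3 ^ kn" by (simp flip: power_mult_distrib)
    have b: "(3::nat) ^ kn = 3 ^ (kn - h) * 3 ^ h" using hk by (simp flip: power_add)
    show ?thesis using a b by (metis mult.assoc)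
  qed
  have key2: "(4::nat) ^ m \<le> 3 ^ kn * 3 ^ (kn - h)"
    using key n9 by simp
  have low: "(3::nat) ^ kn \<le> 4 ^ m"
  proof -
    have "(3::nat) ^ kn \<le> 3 ^ m" using knm by (simp add: power_increasing)
    also have "\<dots> \<le> 4 ^ m" by (simp add: power_mono)
    finally show ?thesis .
  qed
  have main: "(4/9::real) ^ kn \<le> \<bar>(4/3) ^ kn - real_of_int n\<bar>" for n :: int
  proof (rule ccontr)
    assume "\<not> ?thesis"
    hence lt: "\<bar>(4/3) ^ kn - real_of_int n\<bar> < (4/9::real) ^ kn" by simp
    define e :: int where "e = 4 ^ kn - n * 3 ^ kn"
    have p3: "(3::real) ^ kn > 0" by simp
    have eq1: "(4/3::real) ^ kn - real_of_int n = real_of_int e / 3 ^ kn"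
      by (rule aux_eq1) (simp add: e_def)
    have eq2: "(4/9::real) ^ kn = (4 ^ kn / 3 ^ kn) / 3 ^ kn"
    proof -
      have "(9::real) ^ kn = 3 ^ kn * 3 ^ kn" by (simp flip: power_mult_distrib)
      thus ?thesis by (simp add: power_divide)
    qed
    have elt: "\<bar>real_of_int e\<bar> < 4 ^ kn / 3 ^ kn"
    proof -
      have "\<bar>real_of_int e / 3 ^ kn\<bar> < (4 ^ kn / 3 ^ kn) / 3 ^ kn" using lt by (simp only: eq1 eq2)
      thus ?thesis using p3 by (intro aux_elt) 
    qed
    define E :: int where "E = 4 ^ (m - kn) * e"
    define A :: int where "A = 4 ^ (m - kn) * n"
    have eqm: "(4::int) ^ m = A * 3 ^ kn + E"
    proof -
      have "(4::int) ^ m = 4 ^ (m - kn) * 4 ^ kn" using knm by (simp flip: power_add)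
      thus ?thesis unfolding A_def E_def e_def by (simp add: algebra_simps)
    qed
    have Elt: "\<bar>real_of_int E\<bar> < 3 ^ (kn - h)"
    proof -
      have "\<bar>real_of_int E\<bar> = 4 ^ (m - kn) * \<bar>real_of_int e\<bar>" unfolding E_def by (simp add: abs_mult)
      also have "\<dots> < 4 ^ (m - kn) * (4 ^ kn / 3 ^ kn)"
        using elt by (intro mult_strict_left_mono) auto
      also have "\<dots> = 4 ^ m / 3 ^ kn" using knm by (simp add: power_add [symmetric])
      also have "\<dots> \<le> 3 ^ (kn - h)"
      proof -
        have "real ((4::nat) ^ m) \<le> real (3 ^ kn * 3 ^ (kn - h))" using key2 by linarith
        hence "(4::real) ^ m \<le> 3 ^ kn * 3 ^ (kn - h)" by simp
        thus ?thesis using p3 by (simp add: divide_le_eq mult.commute)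
      qed
      finally show ?thesis .
    qed
    hence Elt': "\<bar>E\<bar> < 3 ^ (kn - h)"
      by (rule aux_Elt)
    have pw: "(3::int) ^ (kn - h) \<le> 3 ^ kn" by (simp add: power_increasing)
    define R :: nat where "R = 4 ^ m mod 3 ^ kn"
    have Ri: "int R = (4::int) ^ m mod 3 ^ kn" unfolding R_def by (simp add: of_nat_mod)
    show False
    proof (cases "E \<ge> 0")
      case True
      have "E < 3 ^ kn" using Elt' pw by linarith
      hence "(4::int) ^ m mod 3 ^ kn = E"
        unfolding eqm using True by (simp add: mod_pos_pos_trivial)
      hence "int R < int (3 ^ (kn - h))" using Ri Elt' by simp
      hence "R < 3 ^ (kn - h)" by linarith
      hence "has_block (ternary_digits (4 ^ m)) h 0"
        using block0[of h kn "4 ^ m"] hk kn0 low R_def by simp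
      thus False using assms(3) by simp
    next
      case False
      have eqm': "(4::int) ^ m = (A - 1) * 3 ^ kn + (E + 3 ^ kn)" using eqm by (simp add: algebra_simps)
      have "E + 3 ^ kn < 3 ^ kn" "0 \<le> E + 3 ^ kn" using Elt' pw False by linarith+
      moreover have "(4::int) ^ m mod 3 ^ kn = (E + 3 ^ kn) mod 3 ^ kn"
        unfolding eqm' by (rule mod_mult_self3)
      ultimately have "(4::int) ^ m mod 3 ^ kn = E + 3 ^ kn"
        by (simp only: mod_pos_pos_trivial)
      hence "int R + int (3 ^ (kn - h)) \<ge> int (3 ^ kn)" using Ri Elt' by simp
      hence "R \<ge> 3 ^ kn - 3 ^ (kn - h)" by linarith
      hence "has_block (ternary_digits (4 ^ m)) h 2"
        using block2[of h kn "4 ^ m"] hk kn0 low R_def by simp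
      thus False using assms(4) by simp
    qed
  qed
  show "dist_int ((4 / 3) powi k) \<ge> (4 / 9) powi k"
    unfolding dist_int_def kn power_int_of_nat
    by (rule cINF_greatest) (auto simp: main)
qed

end
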